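(* Let $f$ be a homeomorphism of a compact metric space $X$ and suppose $f|_{\Omega(f)}$ is expansive with expansivity constant $c>0$. Then $W^s_c(x)\subset W^s(x)$ and $W^u_c(x)\subset W^u(x)$ for every $x\in X$.
   Context: $\Omega(f)$ is the non-wandering set. $c>0$ is an expansivity constant of $f|_{\Omega(f)}$ if for all distinct $x,y\in\Omega(f)$ there is $n\in\mathbb{Z}$ with $d(f^n(x),f^n(y))>c$. $W^s_c(x)=\{y: d(f^n(x),f^n(y))\le c\ \forall n\ge0\}$, $W^u_c(x)=\{y: d(f^{-n}(x),f^{-n}(y))\le c\ \forall n\ge0\}$, $W^s(x)=\{y: d(f^n(x),f^n(y))\to0\ (n\to+\infty)\}$, $W^u(x)=\{y: d(f^{-n}(x),f^{-n}(y))\to0\ (n\to+\infty)\}$. *)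

theory Defs
  imports "HOL-Analysis.Analysis"
begin

definition iter_int :: "('a \<Rightarrow> 'a) \<Rightarrow> ('a \<Rightarrow> 'a) \<Rightarrow> int \<Rightarrow> 'a \<Rightarrow> 'a" where
  "iter_int f g n = (if 0 \<le> n then f ^^ nat n else g ^^ nat (- n))"

definition nonwandering :: "'a::metric_space set \<Rightarrow> ('a \<Rightarrow> 'a) \<Rightarrow> 'a set" where
  "nonwandering X f = {x \<in> X. \<forall>U. openin (top_of_set X) U \<and> x \<in> U \<longrightarrow>
      (\<exists>n::nat. n \<ge> 1 \<and> (f ^^ n) ` U \<inter> U \<noteq> {})}"

definition expansive_const_on :: "'a::metric_space set \<Rightarrow> ('a \<Rightarrow> 'a) \<Rightarrow> ('a \<Rightarrow> 'a) \<Rightarrow> real \<Rightarrow> bool" where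
  "expansive_const_on A f g c \<longleftrightarrow> c > 0 \<and>
     (\<forall>x\<in>A. \<forall>y\<in>A. x \<noteq> y \<longrightarrow> (\<exists>n::int. dist (iter_int f g n x) (iter_int f g n y) > c))"

definition local_stable :: "'a::metric_space set \<Rightarrow> ('a \<Rightarrow> 'a) \<Rightarrow> real \<Rightarrow> 'a \<Rightarrow> 'a set" where
  "local_stable X f c x = {y \<in> X. \<forall>n::nat. dist ((f ^^ n) x) ((f ^^ n) y) \<le> c}"

definition stable_set :: "'a::metric_space set \<Rightarrow> ('a \<Rightarrow> 'a) \<Rightarrow> 'a \<Rightarrow> 'a set" where
  "stable_set X f x = {y \<in> X. (\<lambda>n. dist ((f ^^ n) x) ((f ^^ n) y)) \<longlonglongrightarrow> 0}"

text \<open>Unstable sets are the stable sets of the inverse g.\<close>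

end

theory Submission
  imports Defs
begin

lemma iter_in: "z \<in> X \<Longrightarrow> f ` X \<subseteq> X \<Longrightarrow> (f ^^ n) z \<in> X"
  by (induction n) auto

lemma iter_cont:
  assumes "continuous_on X f" "f ` X \<subseteq> X"
  shows "continuous_on X (f ^^ n)"
proof (induction n)
  case 0 then show ?case by (simp add: continuous_on_id)
next
  case (Suc n)
  have "(f ^^ n) ` X \<subseteq> X" using iter_in[OF _ assms(2)] by (simp add: image_subset_iff)
  then have "continuous_on ((f ^^ n) ` X) f" by (rule continuous_on_subset[OF assms(1)])
  then have "continuous_on X (f \<circ> (f ^^ n))" by (rule continuous_on_compose[OF Suc.IH])
  then show ?case by simp
qed

lemma iter_cancel:
  assumes "\<forall>z\<in>X. g (f z) = z" "f ` X \<subseteq> X" "z \<in> X"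
  shows "j \<le> n \<Longrightarrow> (g ^^ j) ((f ^^ n) z) = (f ^^ (n - j)) z"
proof (induction j)
  case 0 then show ?case by simp
next
  case (Suc j)
  have k: "n - j = Suc (n - Suc j)" using Suc.prems by simp
  have IH: "(g ^^ j) ((f ^^ n) z) = (f ^^ (n - j)) z" using Suc.IH Suc.prems by simp
  have w: "(f ^^ (n - Suc j)) z \<in> X" using iter_in[OF assms(3,2)] .
  have "(g ^^ Suc j) ((f ^^ n) z) = g ((f ^^ (n - j)) z)" using IH by simp
  also have "\<dots> = g (f ((f ^^ (n - Suc j)) z))" unfolding k by simp
  also have "\<dots> = (f ^^ (n - Suc j)) z" using assms(1) w by simp
  finally show ?case .
qed

lemma omega_nw:
  assumes "\<forall>z\<in>X. g (f z) = z" "f ` X \<subseteq> X" "g ` X \<subseteq> X" "\<forall>z\<in>X. f (g z) = z"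
    and "z \<in> X" "strict_mono r" "(\<lambda>k. (h ^^ r k) z) \<longlonglongrightarrow> p" "p \<in> X"
    and hc: "h = f \<or> h = g"
  shows "p \<in> nonwandering X f"
  unfolding nonwandering_def
proof (intro CollectI conjI allI impI)
  show "p \<in> X" by fact
  fix U assume U: "openin (top_of_set X) U \<and> p \<in> U"
  then obtain V where V: "open V" "U = X \<inter> V" by (meson openin_open)
  have "eventually (\<lambda>k. (h ^^ r k) z \<in> V) sequentially"
    using topological_tendstoD[OF assms(7) V(1)] V(2) U by simp
  then obtain N where N: "\<forall>k\<ge>N. (h ^^ r k) z \<in> V" by (auto simp: eventually_sequentially)
  have hX: "h ` X \<subseteq> X" using hc assms(2,3) by auto
  have inU: "(h ^^ r k) z \<in> U" if "k \<ge> N" for k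
    using N that V iter_in[OF assms(5) hX] by blast
  define n where "n = r (Suc N) - r N"
  have lt: "r N < r (Suc N)" using assms(6) by (simp add: strict_mono_def)
  then have n1: "n \<ge> 1" unfolding n_def by simp
  show "\<exists>n\<ge>1. (f ^^ n) ` U \<inter> U \<noteq> {}"
  proof (cases "h = f")
    case True
    have "(f ^^ n) ((f ^^ r N) z) = (f ^^ (n + r N)) z" by (simp add: funpow_add)
    also have "n + r N = r (Suc N)" using lt n_def by simp
    finally have "(f ^^ n) ((f ^^ r N) z) = (f ^^ r (Suc N)) z" .
    moreover have "(f ^^ r N) z \<in> U" "(f ^^ r (Suc N)) z \<in> U" using inU True by auto
    ultimately have "(f ^^ r (Suc N)) z \<in> (f ^^ n) ` U \<inter> U" by (metis IntI image_eqI)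
    then show ?thesis using n1 by blast
  next
    case False
    then have hg: "h = g" using hc by simp
    have "(f ^^ n) ((g ^^ r (Suc N)) z) = (g ^^ (r (Suc N) - n)) z"
      by (rule iter_cancel[OF assms(4,3,5)], use n_def in simp)
    also have "r (Suc N) - n = r N" using lt n_def by simp
    finally have eq: "(f ^^ n) ((g ^^ r (Suc N)) z) = (g ^^ r N) z" .
    have "(g ^^ r N) z \<in> U" "(g ^^ r (Suc N)) z \<in> U" using inU hg by auto
    then have "(g ^^ r N) z \<in> (f ^^ n) ` U \<inter> U" using eq by (metis IntI image_eqI)
    then show ?thesis using n1 by blast
  qed
qed

lemma key:
  fixes X :: "'a::metric_space set"
  assumes cX: "compact X" and hom: "homeomorphism X X f g"
    and exp: "expansive_const_on A f g c"
    and omega: "\<And>z r p. z \<in> X \<Longrightarrow> strict_mono r \<Longrightarrow> (\<lambda>k. (f ^^ r k) z) \<longlonglongrightarrow> p \<Longrightarrow> p \<in> X \<Longrightarrow> p \<in> A"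
    and xX: "x \<in> X" and yS: "y \<in> local_stable X f c x"
  shows "y \<in> stable_set X f x"
proof (rule ccontr)
  have gf: "\<forall>z\<in>X. g (f z) = z" and fX: "f ` X \<subseteq> X" and fg: "\<forall>z\<in>X. f (g z) = z"
    and gX: "g ` X \<subseteq> X" and cf: "continuous_on X f" and cg: "continuous_on X g"
    using hom unfolding homeomorphism_def by auto
  have yX: "y \<in> X" and yc: "\<And>n. dist ((f ^^ n) x) ((f ^^ n) y) \<le> c"
    using yS unfolding local_stable_def by auto
  define h where "h = (\<lambda>n. dist ((f ^^ n) x) ((f ^^ n) y))"
  assume "y \<notin> stable_set X f x"
  then have "\<not> h \<longlonglongrightarrow> 0" using yX unfolding stable_set_def h_def by auto
  then obtain e where e: "e > 0" "\<forall>no. \<exists>n\<ge>no. \<not> h n < e"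
    unfolding LIMSEQ_iff h_def by auto
  then have "infinite {n. h n \<ge> e}"
    unfolding infinite_nat_iff_unbounded_le by (auto simp: not_less)
  then have "\<exists>r::nat\<Rightarrow>nat. strict_mono r \<and> (\<forall>n. r n \<in> {n. h n \<ge> e})"
    by (rule infinite_enumerate)
  then obtain s :: "nat \<Rightarrow> nat" where s: "strict_mono s" "\<forall>k. h (s k) \<ge> e"
    by auto
  define u where "u = (\<lambda>k. ((f ^^ s k) x, (f ^^ s k) y))"
  have uX: "\<forall>k. u k \<in> X \<times> X" unfolding u_def using iter_in[OF xX fX] iter_in[OF yX fX] by simp
  have sc: "seq_compact (X \<times> X)"
    by (rule compact_imp_seq_compact[OF compact_Times[OF cX cX]])
  obtain l and r :: "nat \<Rightarrow> nat" where l: "l \<in> X \<times> X" "strict_mono r" "(u \<circ> r) \<longlonglongrightarrow> l"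
    by (rule seq_compactE[OF sc uX])
  obtain p q where pq: "l = (p, q)" by fastforce
  define t where "t = s \<circ> r"
  have t: "strict_mono t" unfolding t_def by (rule strict_mono_o[OF s(1) l(2)])
  have px: "(\<lambda>k. (f ^^ t k) x) \<longlonglongrightarrow> p"
    using tendsto_fst[OF l(3)] pq unfolding u_def t_def by (simp add: o_def)
  have qy: "(\<lambda>k. (f ^^ t k) y) \<longlonglongrightarrow> q"
    using tendsto_snd[OF l(3)] pq unfolding u_def t_def by (simp add: o_def)
  have pX: "p \<in> X" and qX: "q \<in> X" using l pq by auto
  have pA: "p \<in> A" using omega[OF xX t px pX] .
  have qA: "q \<in> A" using omega[OF yX t qy qX] .
  have "e \<le> dist p q"
    apply (rule LIMSEQ_le_const[OF tendsto_dist[OF px qy]])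
    using s(2) unfolding t_def h_def by auto
  then have "p \<noteq> q" using e by auto
  then obtain m :: int where m: "dist (iter_int f g m p) (iter_int f g m q) > c"
    using exp pA qA \<open>p \<noteq> q\<close> unfolding expansive_const_on_def by blast
  have evX: "\<And>z. z \<in> X \<Longrightarrow> \<forall>\<^sub>F k in sequentially. (f ^^ t k) z \<in> X"
  proof -
    fix z assume "z \<in> X"
    then have "\<forall>k. (f ^^ t k) z \<in> X" using iter_in[OF _ fX] by simp
    then show "\<forall>\<^sub>F k in sequentially. (f ^^ t k) z \<in> X" by (simp add: always_eventually)
  qed
  have "dist (iter_int f g m p) (iter_int f g m q) \<le> c"
  proof (cases "0 \<le> m")
    case True
    define j where "j = nat m"
    have it: "iter_int f g m = f ^^ j" using True unfolding iter_int_def j_def by simp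
    have cj: "continuous_on X (f ^^ j)" by (rule iter_cont[OF cf fX])
    have a: "(\<lambda>k. (f ^^ j) ((f ^^ t k) x)) \<longlonglongrightarrow> (f ^^ j) p"
      using continuous_on_tendsto_compose[OF cj px pX evX[OF xX]] .
    have b: "(\<lambda>k. (f ^^ j) ((f ^^ t k) y)) \<longlonglongrightarrow> (f ^^ j) q"
      using continuous_on_tendsto_compose[OF cj qy qX evX[OF yX]] .
    have "dist ((f ^^ j) p) ((f ^^ j) q) \<le> c"
    proof (rule LIMSEQ_le_const2[OF tendsto_dist[OF a b]], intro exI allI impI)
      fix k
      show "dist ((f ^^ j) ((f ^^ t k) x)) ((f ^^ j) ((f ^^ t k) y)) \<le> c"
        using yc[of "j + t k"] by (simp add: funpow_add)
    qed
    then show ?thesis using it by simp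
  next
    case False
    define j where "j = nat (- m)"
    have it: "iter_int f g m = g ^^ j" using False unfolding iter_int_def j_def by simp
    have cj: "continuous_on X (g ^^ j)" by (rule iter_cont[OF cg gX])
    have a: "(\<lambda>k. (g ^^ j) ((f ^^ t k) x)) \<longlonglongrightarrow> (g ^^ j) p"
      using continuous_on_tendsto_compose[OF cj px pX evX[OF xX]] .
    have b: "(\<lambda>k. (g ^^ j) ((f ^^ t k) y)) \<longlonglongrightarrow> (g ^^ j) q"
      using continuous_on_tendsto_compose[OF cj qy qX evX[OF yX]] .
    have "dist ((g ^^ j) p) ((g ^^ j) q) \<le> c"
    proof (rule LIMSEQ_le_const2[OF tendsto_dist[OF a b]], intro exI allI impI)
      fix k assume "j \<le> k"
      then have jk: "j \<le> t k" using seq_suble[OF t, of k] by simp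
      show "dist ((g ^^ j) ((f ^^ t k) x)) ((g ^^ j) ((f ^^ t k) y)) \<le> c"
        using yc[of "t k - j"] iter_cancel[OF gf fX xX jk] iter_cancel[OF gf fX yX jk] by simp
    qed
    then show ?thesis using it by simp
  qed
  then show False using m by simp
qed

lemma exp_sym:
  assumes "expansive_const_on A f g c"
  shows "expansive_const_on A g f c"
  unfolding expansive_const_on_def
proof (intro conjI ballI impI)
  show "c > 0" using assms unfolding expansive_const_on_def by simp
  fix x y assume "x \<in> A" "y \<in> A" "x \<noteq> y"
  then obtain n :: int where n: "dist (iter_int f g n x) (iter_int f g n y) > c"
    using assms unfolding expansive_const_on_def by blast
  have "iter_int g f (- n) = iter_int f g n"
    unfolding iter_int_def by auto
  then show "\<exists>n::int. dist (iter_int g f n x) (iter_int g f n y) > c"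
    using n by metis
qed

theorem mainTheorem14:
  fixes X :: "'a::metric_space set" and f g :: "'a \<Rightarrow> 'a" and c :: real
  assumes "compact X"
    and "homeomorphism X X f g"
    and "expansive_const_on (nonwandering X f) f g c"
    and "x \<in> X"
  shows "local_stable X f c x \<subseteq> stable_set X f x \<and> local_stable X g c x \<subseteq> stable_set X g x"
proof -
  have gf: "\<forall>z\<in>X. g (f z) = z" and fX: "f ` X \<subseteq> X" and fg: "\<forall>z\<in>X. f (g z) = z"
    and gX: "g ` X \<subseteq> X"
    using assms(2) unfolding homeomorphism_def by auto
  have 1: "local_stable X f c x \<subseteq> stable_set X f x"
  proof
    fix y assume yS: "y \<in> local_stable X f c x"
    show "y \<in> stable_set X f x"
    proof (rule key[OF assms(1,2,3) _ assms(4) yS])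
      fix z r p assume "z \<in> X" "strict_mono r" "(\<lambda>k. (f ^^ r k) z) \<longlonglongrightarrow> p" "p \<in> X"
      then show "p \<in> nonwandering X f" using omega_nw[OF gf fX gX fg, of z r f p] by simp
    qed
  qed
  have 2: "local_stable X g c x \<subseteq> stable_set X g x"
  proof
    fix y assume yS: "y \<in> local_stable X g c x"
    show "y \<in> stable_set X g x"
    proof (rule key[OF assms(1) homeomorphism_symD[OF assms(2)] exp_sym[OF assms(3)] _ assms(4) yS])
      fix z r p assume "z \<in> X" "strict_mono r" "(\<lambda>k. (g ^^ r k) z) \<longlonglongrightarrow> p" "p \<in> X"
      then show "p \<in> nonwandering X f" using omega_nw[OF gf fX gX fg, of z r g p] by simp
    qed
  qed
  show ?thesis using 1 2 by blast
qed

end
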